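(* Let $\ell\ge 2$ and let $u,v$ be vertices of $CK(2,\ell)$. The imprints $im(u)$ and $im(v)$ contain the same number of $+$ signs and the same number of $-$ signs if and only if $v$ can be obtained from $u$ by a finite sequence of the following operations: (i) rotation, replacing $a_1a_2\ldots a_\ell$ by $a_2\ldots a_\ell a_1$; (ii) valid swap, replacing a single symbol $a_i$ by a symbol of $\{0,1,2\}$ different from both cyclic neighbours $a_{i-1}$ and $a_{i+1}$ (indices modulo $\ell$).
   Context: $CK(2,\ell)$ has as vertices all sequences $a_1\ldots a_\ell\in\{0,1,2\}^\ell$ with $a_i\neq a_{i+1}$ for $1\le i\le\ell-1$ and $a_1\ne a_\ell$, and an arc from $a_1\ldots a_\ell$ to $b_1\ldots b_\ell$ iff both are vertices and $b_i=a_{i+1}$ for $1\le i\le \ell-1$. For distinct $a,b\in\{0,1,2\}$ define $sgn(0,1)=sgn(1,2)=sgn(2,0)=+$ and $sgn(1,0)=sgn(2,1)=sgn(0,2)=-$. The imprint of a vertex $v=v_1\ldots v_\ell$ is the sequence $im(v)=(sgn(v_1,v_2),sgn(v_2,v_3),\dots,sgn(v_{\ell-1},v_\ell),sgn(v_\ell,v_1))$ of length $\ell$. *)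

theory Defs
  imports Main
begin

text \<open>Vertices of CK(2,l): words a_1...a_l over {0,1,2} (0-indexed lists here),
  with consecutive symbols distinct, cyclically.\<close>
definition is_vertex :: "nat \<Rightarrow> nat list \<Rightarrow> bool" where
  "is_vertex l a \<longleftrightarrow> length a = l \<and> set a \<subseteq> {0,1,2}
     \<and> (\<forall>i. Suc i < l \<longrightarrow> a ! i \<noteq> a ! Suc i) \<and> a ! 0 \<noteq> a ! (l - 1)"

text \<open>sgn(a,b) = + (encoded as True) iff (a,b) is one of (0,1),(1,2),(2,0).\<close>
definition sgn_pos :: "nat \<Rightarrow> nat \<Rightarrow> bool" where
  "sgn_pos a b \<longleftrightarrow> (a, b) \<in> {(0,1), (1,2), (2,0)}"

definition imprint :: "nat list \<Rightarrow> bool list" where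
  "imprint a = map (\<lambda>i. sgn_pos (a ! i) (a ! ((i + 1) mod length a))) [0..<length a]"

definition count_plus :: "nat list \<Rightarrow> nat" where
  "count_plus a = length (filter (\<lambda>s. s) (imprint a))"

definition count_minus :: "nat list \<Rightarrow> nat" where
  "count_minus a = length (filter (\<lambda>s. \<not> s) (imprint a))"

definition valid_swap :: "nat list \<Rightarrow> nat list \<Rightarrow> bool" where
  "valid_swap a b \<longleftrightarrow> (\<exists>i c. i < length a \<and> c \<in> {0,1,2}
     \<and> c \<noteq> a ! ((i + length a - 1) mod length a)
     \<and> c \<noteq> a ! ((i + 1) mod length a)
     \<and> b = a[i := c])"

definition op_step :: "nat list \<Rightarrow> nat list \<Rightarrow> bool" where
  "op_step a b \<longleftrightarrow> b = rotate1 a \<or> valid_swap a b"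

end

theory Submission
  imports Defs
begin

definition nx :: "nat \<Rightarrow> bool \<Rightarrow> nat" where
  "nx c b = (c + (if b then 1 else 2)) mod 3"
fun wd :: "nat \<Rightarrow> bool list \<Rightarrow> nat list" where
  "wd c [] = []" | "wd c (b # s) = c # wd (nx c b) s"

fun ep :: "nat \<Rightarrow> bool list \<Rightarrow> nat" where
  "ep c [] = c" | "ep c (b # s) = ep (nx c b) s"

lemma wd_append: "wd c (xs @ ys) = wd c xs @ wd (ep c xs) ys"
  by (induction xs arbitrary: c) auto

lemma ep_append: "ep c (xs @ ys) = ep (ep c xs) ys"
  by (induction xs arbitrary: c) auto

lemma length_wd[simp]: "length (wd c s) = length s"
  by (induction s arbitrary: c) auto

lemma nx_lt[simp]: "nx c b < 3" by (simp add: nx_def)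

lemma ep_lt: "c < 3 \<Longrightarrow> ep c s < 3"
  by (induction s arbitrary: c) auto

lemma nx_nx: "nx (nx c b1) b2 = (c + (if b1 then 1 else 2) + (if b2 then 1 else 2)) mod 3"
  unfolding nx_def by (simp add: mod_add_left_eq)
lemma nx_comm: "nx (nx c b1) b2 = nx (nx c b2) b1"
  unfolding nx_nx by (simp add: ac_simps)
lemma c3: "(c::nat) < 3 \<Longrightarrow> c = 0 \<or> c = 1 \<or> c = 2" by arith
lemma nx_back: "c < 3 \<Longrightarrow> b1 \<noteq> b2 \<Longrightarrow> nx (nx c b1) b2 = c"
  unfolding nx_nx by (cases b1; cases b2; auto dest!: c3)
lemma nx_three: "c < 3 \<Longrightarrow> nx (nx (nx c b) b) b = c"
  unfolding nx_nx by (cases b; auto dest!: c3 simp: nx_def)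
lemma nx_ne: "c < 3 \<Longrightarrow> nx c b \<noteq> c"
  unfolding nx_def by (drule c3) (cases b; elim disjE; simp)

definition R :: "bool list \<Rightarrow> bool list \<Rightarrow> bool" where
  "R s t \<longleftrightarrow> (\<exists>xs ys b1 b2. b1 \<noteq> b2 \<and> s = xs @ [b1, b2] @ ys \<and> t = xs @ [b2, b1] @ ys)"

lemma R_step:
  assumes "R s t" "c < 3" "ep c s = c"
  shows "op_step (wd c s) (wd c t) \<and> ep c t = c"
proof -
  obtain xs ys b1 b2 where b: "b1 \<noteq> b2" and s: "s = xs @ [b1, b2] @ ys" and t: "t = xs @ [b2, b1] @ ys"
    using assms(1) unfolding R_def by blast
  define e where "e = ep c xs"
  have e3: "e < 3" using ep_lt assms(2) e_def by auto
  have hs: "wd c s = wd c xs @ [e, nx e b1] @ wd e ys"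
    using s e3 b by (simp add: wd_append e_def nx_back)
  have ht: "wd c t = wd c xs @ [e, nx e b2] @ wd e ys"
    using t e3 b by (simp add: wd_append e_def nx_back)
  have eps: "ep c s = ep e ys" using s e3 b by (simp add: ep_append e_def nx_back)
  have ept: "ep c t = ep e ys" using t e3 b by (simp add: ep_append e_def nx_back)
  define L where "L = length (wd c s)"
  have L: "L = length xs + 2 + length ys" using s L_def by simp
  define i where "i = length xs + 1"
  have i1: "(i + L - 1) mod L = length xs"
  proof -
    have "i + L - 1 = length xs + L" using L i_def by simp
    moreover have lt: "length xs < L" using L by simp
    moreover have "(length xs + L) mod L = length xs" using lt by simp
    ultimately show ?thesis by simp
  qed
  have n1: "wd c s ! length xs = e" using hs by (simp add: nth_append)
  have n2: "wd c s ! ((i + 1) mod L) = e"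
  proof (cases ys)
    case Nil
    then have "(i + 1) mod L = 0" using L i_def by simp
    moreover have "wd c s ! 0 = c" using s by (cases xs) auto
    moreover have "e = c" using eps assms(3) Nil by simp
    ultimately show ?thesis by simp
  next
    case (Cons y ys')
    then have "(i + 1) mod L = length xs + 2" using L i_def by simp
    then show ?thesis using hs Cons by (simp add: nth_append)
  qed
  have upd: "wd c t = (wd c s)[i := nx e b2]"
    using hs ht i_def by (simp add: list_update_append)
  have "valid_swap (wd c s) (wd c t)"
    unfolding valid_swap_def
    apply (rule exI[of _ i], rule exI[of _ "nx e b2"])
  proof (intro conjI)
    show "i < length (wd c s)" using L i_def L_def by simp
    show "nx e b2 \<in> {0, 1, 2}" using c3[OF nx_lt[of e b2]] by auto
    show "nx e b2 \<noteq> wd c s ! ((i + length (wd c s) - 1) mod length (wd c s))"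
      using i1 n1 nx_ne[OF e3] L_def by simp
    show "nx e b2 \<noteq> wd c s ! ((i + 1) mod length (wd c s))"
      using n2 nx_ne[OF e3] L_def by simp
    show "wd c t = (wd c s)[i := nx e b2]" using upd .
  qed
  then show ?thesis using op_step_def eps ept assms(3) by auto
qed

lemma R_star:
  assumes "R\<^sup>*\<^sup>* s t" "c < 3" "ep c s = c"
  shows "op_step\<^sup>*\<^sup>* (wd c s) (wd c t) \<and> ep c t = c"
  using assms(1)
proof (induction rule: rtranclp_induct)
  case base then show ?case using assms by auto
next
  case (step y z)
  then show ?case using R_step[of y z c] assms(2)
    by (meson rtranclp.rtrancl_into_rtrancl)
qed

lemma R_sym: "R s t \<Longrightarrow> R t s"
proof -
  assume "R s t"
  then obtain xs ys b1 b2 where "b1 \<noteq> b2" "s = xs @ [b1, b2] @ ys" "t = xs @ [b2, b1] @ ys"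
    unfolding R_def by blast
  then show "R t s" unfolding R_def by blast
qed

lemma R_star_sym: "R\<^sup>*\<^sup>* s t \<Longrightarrow> R\<^sup>*\<^sup>* t s"
proof (induction rule: rtranclp_induct)
  case base then show ?case by simp
next
  case (step y z)
  then show ?case using R_sym by (meson converse_rtranclp_into_rtranclp)
qed

lemma R_cons: "R s t \<Longrightarrow> R (b # s) (b # t)"
  unfolding R_def by (metis append_Cons)

lemma R_star_cons: "R\<^sup>*\<^sup>* s t \<Longrightarrow> R\<^sup>*\<^sup>* (b # s) (b # t)"
proof (induction rule: rtranclp_induct)
  case base then show ?case by simp
next
  case (step y z)
  then show ?case using R_cons by (meson rtranclp.rtrancl_into_rtrancl)
qed

definition srt :: "bool list \<Rightarrow> bool list" where
  "srt s = replicate (length (filter (\<lambda>x. x) s)) True @ replicate (length (filter (\<lambda>x. \<not> x) s)) False"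

lemma move: "R\<^sup>*\<^sup>* (False # replicate p True @ r) (replicate p True @ False # r)"
proof (induction p)
  case 0 then show ?case by simp
next
  case (Suc p)
  have "R (False # True # replicate p True @ r) (True # False # replicate p True @ r)"
    unfolding R_def by (rule exI[of _ "[]"]) auto
  then show ?case using R_star_cons[OF Suc] by (simp add: converse_rtranclp_into_rtranclp)
qed

lemma sort_R: "R\<^sup>*\<^sup>* s (srt s)"
proof (induction s)
  case Nil then show ?case by (simp add: srt_def)
next
  case (Cons b s)
  have 1: "R\<^sup>*\<^sup>* (b # s) (b # srt s)" using R_star_cons[OF Cons] .
  show ?case
  proof (cases b)
    case True then show ?thesis using 1 by (simp add: srt_def)
  next
    case False
    have "R\<^sup>*\<^sup>* (b # srt s) (srt (b # s))"
      using False move[of "length (filter (\<lambda>x. x) s)" "replicate (length (filter (\<lambda>x. \<not> x) s)) False"]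
      by (simp add: srt_def)
    then show ?thesis using 1 by simp
  qed
qed

lemma srt_idem: "srt (srt s) = srt s"
  by (simp add: srt_def)

lemma length_srt: "length (srt s) = length s"
  using sum_length_filter_compl[of "\<lambda>x. x" s] by (simp add: srt_def)

lemma rot_step:
  assumes "ep c (b # t) = c"
  shows "op_step (wd c (b # t)) (wd (nx c b) (t @ [b]))"
  using assms by (simp add: op_step_def wd_append)

lemma step_K:
  assumes "c < 3" "ep c (b # t) = c"
  shows "op_step\<^sup>*\<^sup>* (wd c (b # t)) (wd (nx c b) (srt (b # t))) \<and> ep (nx c b) (srt (b # t)) = nx c b"
proof -
  have r: "op_step (wd c (b # t)) (wd (nx c b) (t @ [b]))" using rot_step assms(2) .
  have cl: "ep (nx c b) (t @ [b]) = nx c b" using assms(2) by (simp add: ep_append)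
  have "srt (t @ [b]) = srt (b # t)" by (cases b) (simp_all add: srt_def)
  then have "op_step\<^sup>*\<^sup>* (wd (nx c b) (t @ [b])) (wd (nx c b) (srt (b # t))) \<and> ep (nx c b) (srt (b # t)) = nx c b"
    using R_star[OF sort_R[of "t @ [b]"] nx_lt cl] by simp
  then show ?thesis using r by (meson converse_rtranclp_into_rtranclp)
qed

lemma K_lemma:
  assumes "c < 3" "c' < 3" "ep c S = c" "S \<noteq> []" "srt S = S"
  shows "op_step\<^sup>*\<^sup>* (wd c S) (wd c' S)"
proof -
  obtain b S' where S: "S = b # S'" using assms(4) by (cases S) auto
  have st: "\<And>d. d < 3 \<Longrightarrow> ep d S = d \<Longrightarrow> op_step\<^sup>*\<^sup>* (wd d S) (wd (nx d b) S) \<and> ep (nx d b) S = nx d b"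
    using step_K assms(5) S by metis
  define c1 where "c1 = nx c b"
  define c2 where "c2 = nx c1 b"
  have a1: "op_step\<^sup>*\<^sup>* (wd c S) (wd c1 S)" "ep c1 S = c1" using st[OF assms(1,3)] c1_def by auto
  have a2: "op_step\<^sup>*\<^sup>* (wd c1 S) (wd c2 S)" "ep c2 S = c2" using st[OF _ a1(2)] c1_def c2_def by auto
  have a3: "op_step\<^sup>*\<^sup>* (wd c2 S) (wd c S)" using st[OF _ a2(2)] c2_def c1_def nx_three[OF assms(1)] by auto
  have "c' = c \<or> c' = c1 \<or> c' = c2" using c3[OF assms(1)] c3[OF assms(2)] unfolding c1_def c2_def nx_def by (cases b) auto
  then show ?thesis using a1 a2 a3 by (meson rtranclp.rtrancl_refl rtranclp_trans)
qed


lemma key: "x < 3 \<Longrightarrow> y < 3 \<Longrightarrow> x \<noteq> y \<Longrightarrow> nx x (sgn_pos x y) = y"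
  by (drule c3, drule c3) (auto simp: nx_def sgn_pos_def)

lemma rep_aux:
  "(\<forall>x\<in>set a. x < 3) \<Longrightarrow> length s = length a \<Longrightarrow>
   (\<forall>i. Suc i < length a \<longrightarrow> a ! i \<noteq> a ! Suc i \<and> s ! i = sgn_pos (a ! i) (a ! Suc i)) \<Longrightarrow>
   a \<noteq> [] \<Longrightarrow> a = wd (hd a) s"
proof (induction a arbitrary: s)
  case Nil then show ?case by simp
next
  case (Cons x a')
  obtain b s' where s: "s = b # s'" using Cons.prems(2) by (cases s) auto
  show ?case
  proof (cases a')
    case Nil
    then show ?thesis using s Cons.prems(2) by simp
  next
    case (Cons y a'')
    have h0: "x \<noteq> y" "b = sgn_pos x y" using Cons.prems(3)[rule_format, of 0] Cons s by auto
    have x3: "x < 3" "y < 3" using Cons.prems(1) Cons by auto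
    have "a' = wd (hd a') s'"
    proof (rule Cons.IH)
      show "\<forall>x\<in>set a'. x < 3" using Cons.prems(1) by simp
      show "length s' = length a'" using Cons.prems(2) s by simp
      show "\<forall>i. Suc i < length a' \<longrightarrow> a' ! i \<noteq> a' ! Suc i \<and> s' ! i = sgn_pos (a' ! i) (a' ! Suc i)"
      proof (intro allI impI)
        fix i assume "Suc i < length a'"
        then have "Suc (Suc i) < length (x # a')" by simp
        then show "a' ! i \<noteq> a' ! Suc i \<and> s' ! i = sgn_pos (a' ! i) (a' ! Suc i)"
          using Cons.prems(3)[rule_format, of "Suc i"] s by simp
      qed
      show "a' \<noteq> []" using Cons by simp
    qed
    then show ?thesis using s h0 key[OF x3 h0(1)] Cons by simp
  qed
qed

lemma imprint_nth: "i < length a \<Longrightarrow> imprint a ! i = sgn_pos (a ! i) (a ! ((i + 1) mod length a))"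
  unfolding imprint_def by simp

lemma length_imprint[simp]: "length (imprint a) = length a"
  unfolding imprint_def by simp

lemma vertex_rep:
  assumes "is_vertex l a" "l \<ge> 2"
  shows "a = wd (a ! 0) (imprint a) \<and> ep (a ! 0) (imprint a) = a ! 0 \<and> a ! 0 < 3 \<and> length (imprint a) = l"
proof -
  have len: "length a = l" and st: "set a \<subseteq> {0,1,2}" and adj: "\<And>i. Suc i < l \<Longrightarrow> a ! i \<noteq> a ! Suc i"
    and cl: "a ! 0 \<noteq> a ! (l - 1)" using assms(1) unfolding is_vertex_def by auto
  have lt3: "\<And>x. x \<in> set a \<Longrightarrow> x < 3" using st by auto
  have ne: "a \<noteq> []" using len assms(2) by auto
  have lt3': "\<And>i. i < l \<Longrightarrow> a ! i < 3" using lt3 len by auto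
  have A: "a = wd (hd a) (imprint a)"
  proof (rule rep_aux)
    show "\<forall>x\<in>set a. x < 3" using lt3 by auto
    show "length (imprint a) = length a" by simp
    show "\<forall>i. Suc i < length a \<longrightarrow> a ! i \<noteq> a ! Suc i \<and> imprint a ! i = sgn_pos (a ! i) (a ! Suc i)"
      using adj len imprint_nth by auto
    show "a \<noteq> []" by fact
  qed
  have hd: "hd a = a ! 0" using ne by (simp add: hd_conv_nth)
  define s where "s = imprint a"
  have sne: "s \<noteq> []" using ne s_def by (simp add: imprint_def)
  define s0 where "s0 = butlast s"
  define b where "b = last s"
  have sd: "s = s0 @ [b]" using sne s0_def b_def by simp
  have ls0: "length s0 = l - 1" using s0_def s_def len by simp
  have "a = wd (a ! 0) s0 @ [ep (a ! 0) s0]" using A hd sd s_def by (simp add: wd_append)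
  then have al: "a ! (l - 1) = ep (a ! 0) s0" using ls0 by (metis length_wd nth_append_length)
  have "b = s ! (l - 1)" using sd ls0 by (simp add: nth_append)
  also have "\<dots> = sgn_pos (a ! (l - 1)) (a ! 0)"
    using imprint_nth[of "l - 1" a] len assms(2) s_def by simp
  finally have bb: "b = sgn_pos (a ! (l - 1)) (a ! 0)" .
  have "ep (a ! 0) s = nx (ep (a ! 0) s0) b" using sd by (simp add: ep_append)
  also have "\<dots> = a ! 0" using key[of "a ! (l - 1)" "a ! 0"] lt3' assms(2) cl al bb by auto
  finally have E: "ep (a ! 0) s = a ! 0" .
  show ?thesis using A hd E s_def lt3' assms(2) len by auto
qed


lemma cyc_vertex:
  assumes "l \<ge> 2"
  shows "is_vertex l a \<longleftrightarrow> length a = l \<and> set a \<subseteq> {0,1,2} \<and> (\<forall>j<l. a ! j \<noteq> a ! ((j + 1) mod l))"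
proof
  assume v: "is_vertex l a"
  show "length a = l \<and> set a \<subseteq> {0,1,2} \<and> (\<forall>j<l. a ! j \<noteq> a ! ((j + 1) mod l))"
  proof (intro conjI allI impI)
    show "length a = l" "set a \<subseteq> {0,1,2}" using v unfolding is_vertex_def by auto
    fix j assume j: "j < l"
    show "a ! j \<noteq> a ! ((j + 1) mod l)"
    proof (cases "Suc j < l")
      case True then show ?thesis using v unfolding is_vertex_def by simp
    next
      case False
      then have sj: "Suc j = l" "j = l - 1" using j by auto
      then have "(j + 1) mod l = 0" by simp
      note sj this
      then show ?thesis using v unfolding is_vertex_def by auto
    qed
  qed
next
  assume h: "length a = l \<and> set a \<subseteq> {0,1,2} \<and> (\<forall>j<l. a ! j \<noteq> a ! ((j + 1) mod l))"
  have "a ! (l - 1) \<noteq> a ! 0" using h[THEN conjunct2, THEN conjunct2, rule_format, of "l - 1"] assms by simp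
  moreover have "\<forall>i. Suc i < l \<longrightarrow> a ! i \<noteq> a ! Suc i"
  proof (intro allI impI)
    fix i assume "Suc i < l"
    then show "a ! i \<noteq> a ! Suc i" using h[THEN conjunct2, THEN conjunct2, rule_format, of i] by simp
  qed
  ultimately show "is_vertex l a" using h unfolding is_vertex_def by auto
qed

lemma len_filter_sum: "length (filter P xs) = sum_list (map (\<lambda>x. if P x then 1 else 0) xs)"
  by (induction xs) auto

definition ind :: "bool \<Rightarrow> nat" where "ind b = (if b then 1 else 0)"

definition F :: "nat list \<Rightarrow> nat \<Rightarrow> nat" where
  "F a j = ind (sgn_pos (a ! j) (a ! ((j + 1) mod length a)))"

lemma count_sum: "count_plus a = (\<Sum>j<length a. F a j)"
proof -
  have "count_plus a = sum_list (map (\<lambda>x. if x then 1 else 0) (imprint a))"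
    unfolding count_plus_def by (simp add: len_filter_sum)
  also have "\<dots> = sum_list (map (F a) [0..<length a])"
    unfolding imprint_def F_def ind_def by (simp add: comp_def)
  also have "\<dots> = (\<Sum>j<length a. F a j)"
    by (simp add: sum_set_upt_conv_sum_list_nat[symmetric] atLeast0LessThan)
  finally show ?thesis .
qed

lemma count_minus_eq: "count_minus a = length a - count_plus a"
  using sum_length_filter_compl[of "\<lambda>s. s" "imprint a"]
  unfolding count_minus_def count_plus_def by simp

lemma rot_ok:
  assumes "l \<ge> 2" "is_vertex l a"
  shows "is_vertex l (rotate1 a) \<and> count_plus (rotate1 a) = count_plus a"
proof -
  have len: "length a = l" and st: "set a \<subseteq> {0,1,2}" and cy: "\<And>j. j < l \<Longrightarrow> a ! j \<noteq> a ! ((j + 1) mod l)"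
    using assms cyc_vertex by auto
  have rn: "\<And>j. j < l \<Longrightarrow> rotate1 a ! j = a ! ((j + 1) mod l)" using len nth_rotate1 by auto
  have v: "is_vertex l (rotate1 a)"
    unfolding cyc_vertex[OF assms(1)]
  proof (intro conjI allI impI)
    show "length (rotate1 a) = l" using len by simp
    show "set (rotate1 a) \<subseteq> {0,1,2}" using st by simp
    fix j assume j: "j < l"
    have k: "(j + 1) mod l < l" using assms(1) by simp
    show "rotate1 a ! j \<noteq> rotate1 a ! ((j + 1) mod l)"
      using rn[OF j] rn[OF k] cy[OF k] by simp
  qed
  obtain n where n: "l = Suc n" using assms(1) by (cases l) auto
  have Fr: "\<And>j. j < l \<Longrightarrow> F (rotate1 a) j = F a ((j + 1) mod l)"
    unfolding F_def using rn len assms(1) by simp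
  have "count_plus (rotate1 a) = (\<Sum>j<l. F a ((j + 1) mod l))"
    using count_sum[of "rotate1 a"] len Fr by simp
  also have "\<dots> = (\<Sum>j<n. F a (Suc j)) + F a 0"
    using n by (simp add: sum.lessThan_Suc)
  also have "\<dots> = (\<Sum>j<l. F a j)"
    unfolding n sum.lessThan_Suc_shift by simp
  finally show ?thesis using v count_sum[of a] len by simp
qed

lemma loc: "x < 3 \<Longrightarrow> y < 3 \<Longrightarrow> z < 3 \<Longrightarrow> c < 3 \<Longrightarrow> z \<noteq> x \<Longrightarrow> z \<noteq> y \<Longrightarrow> c \<noteq> x \<Longrightarrow> c \<noteq> y \<Longrightarrow>
  ind (sgn_pos c y) + ind (sgn_pos x c) = ind (sgn_pos z y) + ind (sgn_pos x z)"
  by (drule c3, drule c3, drule c3, drule c3) (auto simp: ind_def sgn_pos_def)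


lemma swap_ok:
  assumes "l \<ge> 2" "is_vertex l a" "valid_swap a b"
  shows "is_vertex l b \<and> count_plus b = count_plus a"
proof -
  have len: "length a = l" and st: "set a \<subseteq> {0,1,2}" and cy: "\<And>j. j < l \<Longrightarrow> a ! j \<noteq> a ! ((j + 1) mod l)"
    using assms(1,2) cyc_vertex by auto
  obtain i c where i: "i < l" and c: "c \<in> {0,1,2}" and c1: "c \<noteq> a ! ((i + l - 1) mod l)"
    and c2: "c \<noteq> a ! ((i + 1) mod l)" and b: "b = a[i := c]"
    using assms(3) len unfolding valid_swap_def by blast
  define i' where "i' = (i + l - 1) mod l"
  have i'l: "i' < l" using i'_def assms(1) by simp
  have i'1: "(i' + 1) mod l = i"
  proof (cases i)
    case 0 then show ?thesis using i'_def assms(1) by simp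
  next
    case (Suc k)
    then have "i + l - 1 = k + l" by simp
    then have "i' = k" using i'_def i Suc by simp
    then show ?thesis using Suc i by simp
  qed
  have ip1: "(i + 1) mod l \<noteq> i"
  proof (cases "Suc i < l")
    case True then show ?thesis by simp
  next
    case False
    then have "Suc i = l" using i by simp
    then show ?thesis using assms(1) by auto
  qed
  have i'ne: "i' \<noteq> i" using i'1 ip1 by auto
  have jeq: "\<And>j. j < l \<Longrightarrow> (j + 1) mod l = i \<Longrightarrow> j = i'"
  proof -
    fix j assume j: "j < l" "(j + 1) mod l = i"
    show "j = i'"
    proof (cases "Suc j < l")
      case True
      then have "i = Suc j" using j by simp
      then show ?thesis using i'_def j(1) by simp
    next
      case False
      then have "Suc j = l" using j by simp
      then have "i = 0" using j by simp
      then show ?thesis using i'_def \<open>Suc j = l\<close> by simp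
    qed
  qed
  have lenb: "length b = l" using b len by simp
  have bn: "\<And>j. b ! j = (if j = i then c else a ! j)" using b i len by simp
  have c3': "c < 3" using c by auto
  have a3: "\<And>j. j < l \<Longrightarrow> a ! j < 3" 
  proof -
    fix j assume "j < l"
    then have "a ! j \<in> {0,1,2}" using st len nth_mem by blast
    then show "a ! j < 3" by auto
  qed
  have v: "is_vertex l b"
    unfolding cyc_vertex[OF assms(1)]
  proof (intro conjI allI impI)
    show "length b = l" by fact
    show "set b \<subseteq> {0,1,2}" using b st c set_update_subset_insert by fastforce
    fix j assume j: "j < l"
    show "b ! j \<noteq> b ! ((j + 1) mod l)"
    proof (cases "j = i")
      case True then show ?thesis using bn ip1 c2 by simp
    next
      case False
      show ?thesis
      proof (cases "(j + 1) mod l = i")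
        case True
        then have "j = i'" using jeq j by blast
        then show ?thesis using bn False True c1 i'_def by simp
      next
        case F2: False
        then show ?thesis using bn False cy[OF j] by simp
      qed
    qed
  qed
  have Fe: "\<And>j. j < l \<Longrightarrow> j \<noteq> i \<Longrightarrow> j \<noteq> i' \<Longrightarrow> F b j = F a j"
  proof -
    fix j assume j: "j < l" "j \<noteq> i" "j \<noteq> i'"
    have "(j + 1) mod l \<noteq> i" using jeq j by blast
    then show "F b j = F a j" unfolding F_def using bn lenb len j by simp
  qed
  have Fbi: "F b i = ind (sgn_pos c (a ! ((i + 1) mod l)))" unfolding F_def using bn lenb ip1 by simp
  have Fbi': "F b i' = ind (sgn_pos (a ! i') c)" unfolding F_def using bn lenb i'1 i'ne by simp
  have Fai: "F a i = ind (sgn_pos (a ! i) (a ! ((i + 1) mod l)))" unfolding F_def using len by simp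
  have Fai': "F a i' = ind (sgn_pos (a ! i') (a ! i))" unfolding F_def using len i'1 by simp
  have loc': "F b i + F b i' = F a i + F a i'"
    unfolding Fbi Fbi' Fai Fai'
  proof (rule loc)
    show "a ! i' < 3" using a3 i'l by simp
    show "a ! ((i + 1) mod l) < 3" using a3 assms(1) by simp
    show "a ! i < 3" using a3 i by simp
    show "c < 3" by fact
    show "a ! i \<noteq> a ! i'" using cy[OF i'l] i'1 by simp
    show "a ! i \<noteq> a ! ((i + 1) mod l)" using cy[OF i] .
    show "c \<noteq> a ! i'" using c1 i'_def by simp
    show "c \<noteq> a ! ((i + 1) mod l)" by fact
  qed
  have S: "\<And>x. (\<Sum>j<l. F x j) = F x i + F x i' + (\<Sum>j\<in>{..<l} - {i} - {i'}. F x j)"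
  proof -
    fix x
    have "(\<Sum>j<l. F x j) = F x i + (\<Sum>j\<in>{..<l} - {i}. F x j)"
      using i by (simp add: sum.remove)
    also have "(\<Sum>j\<in>{..<l} - {i}. F x j) = F x i' + (\<Sum>j\<in>{..<l} - {i} - {i'}. F x j)"
      using i'l i'ne by (simp add: sum.remove)
    finally show "(\<Sum>j<l. F x j) = F x i + F x i' + (\<Sum>j\<in>{..<l} - {i} - {i'}. F x j)" by simp
  qed
  have "(\<Sum>j\<in>{..<l} - {i} - {i'}. F b j) = (\<Sum>j\<in>{..<l} - {i} - {i'}. F a j)"
    using Fe by (intro sum.cong) auto
  then have "count_plus b = count_plus a"
    using count_sum[of a] count_sum[of b] len lenb S[of a] S[of b] loc' by simp
  then show ?thesis using v by simp
qed

lemma sound: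
  assumes "op_step\<^sup>*\<^sup>* u v" "l \<ge> 2" "is_vertex l u"
  shows "is_vertex l v \<and> count_plus v = count_plus u"
  using assms(1)
proof (induction rule: rtranclp_induct)
  case base then show ?case using assms by simp
next
  case (step y z)
  then show ?case using rot_ok[OF assms(2), of y] swap_ok[OF assms(2), of y z]
    unfolding op_step_def by auto
qed

theorem lemma4:
  fixes l :: nat and u v :: "nat list"
  assumes "l \<ge> 2" and "is_vertex l u" and "is_vertex l v"
  shows "(count_plus u = count_plus v \<and> count_minus u = count_minus v)
           \<longleftrightarrow> op_step\<^sup>*\<^sup>* u v"
proof
  assume h: "count_plus u = count_plus v \<and> count_minus u = count_minus v"
  define cu where "cu = u ! 0"
  define cv where "cv = v ! 0"
  define su where "su = imprint u"
  define sv where "sv = imprint v"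
  have ru: "u = wd cu su" "ep cu su = cu" "cu < 3" "length su = l"
    using vertex_rep[OF assms(2,1)] cu_def su_def by auto
  have rv: "v = wd cv sv" "ep cv sv = cv" "cv < 3" "length sv = l"
    using vertex_rep[OF assms(3,1)] cv_def sv_def by auto
  have eq: "srt su = srt sv" using h unfolding srt_def su_def sv_def count_plus_def count_minus_def by simp
  define S where "S = srt su"
  have 1: "op_step\<^sup>*\<^sup>* u (wd cu S) \<and> ep cu S = cu"
    using R_star[OF sort_R[of su] ru(3,2)] ru(1) S_def by simp
  have 2: "op_step\<^sup>*\<^sup>* v (wd cv S) \<and> ep cv S = cv"
    using R_star[OF sort_R[of sv] rv(3,2)] rv(1) S_def eq by simp
  have Sne: "S \<noteq> []" using S_def length_srt[of su] ru(4) assms(1) by auto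
  have 3: "op_step\<^sup>*\<^sup>* (wd cu S) (wd cv S)"
    using K_lemma[OF ru(3) rv(3)] 1 Sne S_def srt_idem by simp
  have "R\<^sup>*\<^sup>* S sv" using R_star_sym[OF sort_R[of sv]] S_def eq by simp
  then have 4: "op_step\<^sup>*\<^sup>* (wd cv S) v" using R_star[of S sv cv] 2 rv by simp
  show "op_step\<^sup>*\<^sup>* u v" using 1 3 4 by (meson rtranclp_trans)
next
  assume "op_step\<^sup>*\<^sup>* u v"
  then have "is_vertex l v \<and> count_plus v = count_plus u" using sound assms by blast
  moreover have "length u = l" "length v = l" using assms unfolding is_vertex_def by auto
  ultimately show "count_plus u = count_plus v \<and> count_minus u = count_minus v"
    using count_minus_eq[of u] count_minus_eq[of v] by simp
qed

end
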